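(* Let $\mathsf{T},\mathsf{U}$ be geometric theories over a set $\mathrm{At}$, and let $R = \{([\varphi]_{\mathsf T},[\psi]_{\mathsf T}) \mid (\varphi\vdash\psi)\in\mathsf T\cup\mathsf U\}$, a binary relation on the frame $\mathrm{Geom}(\mathrm{At})/\mathsf{T}$. Let $\overline{R}$ be the least congruence preorder on $\mathrm{Geom}(\mathrm{At})/\mathsf T$ containing $R$, and $\sim_{\overline R}$ the equivalence it induces. Then $\mathrm{Geom}(\mathrm{At})/(\mathsf T\cup\mathsf U)$ is isomorphic to the quotient of $\mathrm{Geom}(\mathrm{At})/\mathsf T$ by $\sim_{\overline R}$.
   Context: Geometric logic over $\mathrm{At}$: conjunctive formulae $\gamma::=p\mid\mathsf{true}\mid\gamma\wedge\gamma$; $\mathrm{Geom}(\mathrm{At})$ consists of $\bigvee S$ for sets $S$ of conjunctive formulae; $\bigvee_i\varphi_i$ collects all disjuncts; $\varphi\wedge\psi=\bigvee\{\gamma\wedge\gamma'\}$ over disjuncts. For a theory $\mathsf T$ (set of sequents $\varphi\vdash\psi$), $\vdash_{\mathsf T}$ is the least relation closed under: theory axioms; reflexivity; cut; $\varphi\wedge\psi\vdash\varphi$, $\varphi\wedge\psi\vdash\psi$; from $\theta\vdash\varphi$, $\theta\vdash\psi$ infer $\theta\vdash\varphi\wedge\psi$; $\varphi\vdash\mathsf{true}$; from $\varphi_i\vdash\psi$ for all $i$ infer $\bigvee_i\varphi_i\vdash\psi$; $\varphi_i\vdash\bigvee_i\varphi_i$. $\mathrm{Geom}(\mathrm{At})/\mathsf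 T$ is the quotient by mutual derivability, classes $[\varphi]_{\mathsf T}$, ordered by derivability; it is a frame. A congruence preorder on a frame $(L,\leq)$ is a preorder $\preceq$ on $L$ containing $\leq$ such that for every $S\subseteq L$, $\bigvee S\preceq b$ whenever $a\preceq b$ for all $a\in S$, and for every finite $S\subseteq L$, $b\preceq\bigwedge S$ whenever $b\preceq a$ for all $a\in S$. It induces $a\sim b$ iff $a\preceq b$ and $b\preceq a$; the quotient $L/{\sim}$ is ordered by the induced order. *)

theory Defs
  imports Main
begin

datatype 'a conj = CAtom 'a | CTrue | CAnd "'a conj" "'a conj"

text \<open>A geometric formula is a (possibly infinite) set S of conjunctive formulae,
  standing for the disjunction of S.\<close>
type_synonym 'a geom = "'a conj set"

definition gconj :: "'a geom \<Rightarrow> 'a geom \<Rightarrow> 'a geom" where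
  "gconj \<phi> \<psi> = {CAnd \<gamma> \<gamma>' | \<gamma> \<gamma>'. \<gamma> \<in> \<phi> \<and> \<gamma>' \<in> \<psi>}"

definition gtrue :: "'a geom" where
  "gtrue = {CTrue}"

definition gdisj :: "'a geom set \<Rightarrow> 'a geom" where
  "gdisj \<Phi> = \<Union>\<Phi>"

type_synonym 'a gtheory = "('a geom \<times> 'a geom) set"

inductive derives :: "'a gtheory \<Rightarrow> 'a geom \<Rightarrow> 'a geom \<Rightarrow> bool" for T where
  ax: "(\<phi>, \<psi>) \<in> T \<Longrightarrow> derives T \<phi> \<psi>"
| refl: "derives T \<phi> \<phi>"
| cut: "derives T \<phi> \<psi> \<Longrightarrow> derives T \<psi> \<chi> \<Longrightarrow> derives T \<phi> \<chi>"
| conjE1: "derives T (gconj \<phi> \<psi>) \<phi>"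
| conjE2: "derives T (gconj \<phi> \<psi>) \<psi>"
| conjI: "derives T \<theta> \<phi> \<Longrightarrow> derives T \<theta> \<psi> \<Longrightarrow> derives T \<theta> (gconj \<phi> \<psi>)"
| trueI: "derives T \<phi> gtrue"
| disjE: "(\<And>\<phi>. \<phi> \<in> \<Phi> \<Longrightarrow> derives T \<phi> \<psi>) \<Longrightarrow> derives T (gdisj \<Phi>) \<psi>"
| disjI: "\<phi> \<in> \<Phi> \<Longrightarrow> derives T \<phi> (gdisj \<Phi>)"

definition cls :: "'a gtheory \<Rightarrow> 'a geom \<Rightarrow> 'a geom set" where
  "cls T \<phi> = {\<psi>. derives T \<phi> \<psi> \<and> derives T \<psi> \<phi>}"

definition lind :: "'a gtheory \<Rightarrow> 'a geom set set" where
  "lind T = range (cls T)"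

definition lind_le :: "'a gtheory \<Rightarrow> ('a geom set \<times> 'a geom set) set" where
  "lind_le T = {(cls T \<phi>, cls T \<psi>) | \<phi> \<psi>. derives T \<phi> \<psi>}"

definition is_join :: "'b set \<Rightarrow> ('b \<times> 'b) set \<Rightarrow> 'b set \<Rightarrow> 'b \<Rightarrow> bool" where
  "is_join L le S j \<longleftrightarrow> j \<in> L \<and> (\<forall>a\<in>S. (a, j) \<in> le)
      \<and> (\<forall>u\<in>L. (\<forall>a\<in>S. (a, u) \<in> le) \<longrightarrow> (j, u) \<in> le)"

definition is_meet :: "'b set \<Rightarrow> ('b \<times> 'b) set \<Rightarrow> 'b set \<Rightarrow> 'b \<Rightarrow> bool" where
  "is_meet L le S m \<longleftrightarrow> m \<in> L \<and> (\<forall>a\<in>S. (m, a) \<in> le)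
      \<and> (\<forall>u\<in>L. (\<forall>a\<in>S. (u, a) \<in> le) \<longrightarrow> (u, m) \<in> le)"

definition cong_preorder :: "'b set \<Rightarrow> ('b \<times> 'b) set \<Rightarrow> ('b \<times> 'b) set \<Rightarrow> bool" where
  "cong_preorder L le P \<longleftrightarrow>
     P \<subseteq> L \<times> L \<and> (\<forall>a\<in>L. (a, a) \<in> P) \<and> trans P \<and> le \<subseteq> P
     \<and> (\<forall>S b j. S \<subseteq> L \<and> b \<in> L \<and> is_join L le S j \<and> (\<forall>a\<in>S. (a, b) \<in> P) \<longrightarrow> (j, b) \<in> P)
     \<and> (\<forall>S b m. S \<subseteq> L \<and> finite S \<and> b \<in> L \<and> is_meet L le S m \<and> (\<forall>a\<in>S. (b, a) \<in> P)
                 \<longrightarrow> (b, m) \<in> P)"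

definition least_cong_preorder :: "'b set \<Rightarrow> ('b \<times> 'b) set \<Rightarrow> ('b \<times> 'b) set \<Rightarrow> ('b \<times> 'b) set" where
  "least_cong_preorder L le R = \<Inter>{P. cong_preorder L le P \<and> R \<subseteq> P}"

definition pre_class :: "'b set \<Rightarrow> ('b \<times> 'b) set \<Rightarrow> 'b \<Rightarrow> 'b set" where
  "pre_class L P a = {b \<in> L. (a, b) \<in> P \<and> (b, a) \<in> P}"

definition pre_quot :: "'b set \<Rightarrow> ('b \<times> 'b) set \<Rightarrow> 'b set set" where
  "pre_quot L P = pre_class L P ` L"

definition pre_quot_le :: "'b set \<Rightarrow> ('b \<times> 'b) set \<Rightarrow> ('b set \<times> 'b set) set" where
  "pre_quot_le L P = {(pre_class L P a, pre_class L P b) | a b. a \<in> L \<and> b \<in> L \<and> (a, b) \<in> P}"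

text \<open>Order isomorphism (for frames, equivalent to frame isomorphism).\<close>
definition order_iso :: "'b set \<Rightarrow> ('b \<times> 'b) set \<Rightarrow> 'c set \<Rightarrow> ('c \<times> 'c) set \<Rightarrow> bool" where
  "order_iso A leA B leB \<longleftrightarrow> (\<exists>f. bij_betw f A B \<and>
      (\<forall>x\<in>A. \<forall>y\<in>A. (x, y) \<in> leA \<longleftrightarrow> (f x, f y) \<in> leB))"

end

theory Submission
  imports Defs
begin

lemma derives_mono: "derives T \<phi> \<psi> \<Longrightarrow> T \<subseteq> T' \<Longrightarrow> derives T' \<phi> \<psi>"
proof (induction rule: derives.induct)
  case (ax \<phi> \<psi>) then show ?case by (blast intro: derives.ax)
next
  case (disjE \<Phi> \<psi>) then show ?case by (blast intro: derives.disjE)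
qed (auto intro: derives.intros)

lemma cls_eq: "cls T \<phi> = cls T \<psi> \<longleftrightarrow> derives T \<phi> \<psi> \<and> derives T \<psi> \<phi>"
proof
  assume "cls T \<phi> = cls T \<psi>"
  moreover have "\<psi> \<in> cls T \<psi>" by (simp add: cls_def derives.refl)
  ultimately have "\<psi> \<in> cls T \<phi>" by simp
  then show "derives T \<phi> \<psi> \<and> derives T \<psi> \<phi>" by (simp add: cls_def)
next
  assume "derives T \<phi> \<psi> \<and> derives T \<psi> \<phi>"
  then show "cls T \<phi> = cls T \<psi>" unfolding cls_def by (blast intro: derives.cut)
qed

lemma mem_cls: "\<phi> \<in> cls T \<psi> \<longleftrightarrow> cls T \<phi> = cls T \<psi>"
  unfolding cls_eq by (simp add: cls_def) blast

definition QQ :: "'a gtheory \<Rightarrow> 'a gtheory \<Rightarrow> ('a geom set \<times> 'a geom set) set" where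
  "QQ T T' = {(cls T \<phi>, cls T \<psi>) | \<phi> \<psi>. derives T' \<phi> \<psi>}"

lemma QQ_iff:
  assumes "T \<subseteq> T'"
  shows "(cls T \<phi>, cls T \<psi>) \<in> QQ T T' \<longleftrightarrow> derives T' \<phi> \<psi>"
proof
  assume "(cls T \<phi>, cls T \<psi>) \<in> QQ T T'"
  then obtain a b where e: "cls T \<phi> = cls T a" "cls T \<psi> = cls T b" "derives T' a b"
    by (auto simp: QQ_def)
  then have "derives T \<phi> a" "derives T b \<psi>" by (auto simp: cls_eq)
  then have "derives T' \<phi> a" "derives T' b \<psi>" using assms derives_mono by blast+
  then show "derives T' \<phi> \<psi>" using e(3) by (blast intro: derives.cut)
qed (auto simp: QQ_def)

lemma le_iff: "(cls T \<phi>, cls T \<psi>) \<in> lind_le T \<longleftrightarrow> derives T \<phi> \<psi>"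
proof -
  have "lind_le T = QQ T T" by (simp add: lind_le_def QQ_def)
  then show ?thesis using QQ_iff[of T T] by simp
qed

lemma lind_le_sub: "lind_le T \<subseteq> QQ T T'" if "T \<subseteq> T'"
  using that by (auto simp: lind_le_def QQ_def intro: derives_mono)

lemma join_cls: "is_join (lind T) (lind_le T) (cls T ` \<Phi>) (cls T (gdisj \<Phi>))"
  unfolding is_join_def lind_def
  by (auto simp: le_iff intro: derives.disjI derives.disjE)

lemma meet2_cls: "is_meet (lind T) (lind_le T) {cls T \<phi>, cls T \<psi>} (cls T (gconj \<phi> \<psi>))"
  unfolding is_meet_def lind_def
  by (auto simp: le_iff intro: derives.conjE1 derives.conjE2 derives.conjI)

lemma finite_meet:
  assumes "finite S" "S \<subseteq> lind T" "T \<subseteq> T'"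
  shows "\<exists>\<phi>. is_meet (lind T) (lind_le T) S (cls T \<phi>) \<and>
     (\<forall>\<theta>. (\<forall>a\<in>S. (cls T \<theta>, a) \<in> QQ T T') \<longrightarrow> derives T' \<theta> \<phi>)"
  using assms(1,2)
proof (induction S rule: finite_induct)
  case empty
  show ?case
    by (rule exI[of _ gtrue]) (auto simp: is_meet_def lind_def le_iff intro: derives.trueI)
next
  case (insert s S)
  then obtain \<phi> where m: "is_meet (lind T) (lind_le T) S (cls T \<phi>)"
    and q: "\<forall>\<theta>. (\<forall>a\<in>S. (cls T \<theta>, a) \<in> QQ T T') \<longrightarrow> derives T' \<theta> \<phi>" by auto
  obtain \<psi> where s: "s = cls T \<psi>" using insert.prems by (auto simp: lind_def)
  have "is_meet (lind T) (lind_le T) (insert s S) (cls T (gconj \<psi> \<phi>))"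
    unfolding is_meet_def
  proof (intro HOL.conjI ballI impI)
    show "cls T (gconj \<psi> \<phi>) \<in> lind T" by (simp add: lind_def)
  next
    fix a assume "a \<in> insert s S"
    then show "(cls T (gconj \<psi> \<phi>), a) \<in> lind_le T"
    proof
      assume "a = s" then show ?thesis using s by (simp add: le_iff derives.conjE1)
    next
      assume "a \<in> S"
      then have "(cls T \<phi>, a) \<in> lind_le T" using m by (simp add: is_meet_def)
      moreover obtain c where "a = cls T c" using \<open>a \<in> S\<close> insert.prems by (auto simp: lind_def)
      ultimately show ?thesis by (auto simp: le_iff intro: derives.cut derives.conjE2)
    qed
  next
    fix u assume u: "u \<in> lind T" "\<forall>a\<in>insert s S. (u, a) \<in> lind_le T"
    then obtain \<theta> where ut: "u = cls T \<theta>" by (auto simp: lind_def)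
    have "(u, cls T \<phi>) \<in> lind_le T" using m u by (simp add: is_meet_def)
    moreover have "(u, s) \<in> lind_le T" using u by simp
    ultimately show "(u, cls T (gconj \<psi> \<phi>)) \<in> lind_le T"
      using ut s by (simp add: le_iff derives.conjI)
  qed
  moreover have "\<forall>\<theta>. (\<forall>a\<in>insert s S. (cls T \<theta>, a) \<in> QQ T T') \<longrightarrow> derives T' \<theta> (gconj \<psi> \<phi>)"
    using q s QQ_iff[OF assms(3)] by (auto intro: derives.conjI)
  ultimately show ?case by blast
qed

lemma QQ_trans: "T \<subseteq> T' \<Longrightarrow> trans (QQ T T')"
proof (rule transI)
  fix x y z assume s: "T \<subseteq> T'" and xy: "(x, y) \<in> QQ T T'" and yz: "(y, z) \<in> QQ T T'"
  then obtain a b b' c where e: "x = cls T a" "y = cls T b" "y = cls T b'" "z = cls T c"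
    "derives T' a b" "derives T' b' c" by (auto simp: QQ_def)
  then have "derives T b b'" by (simp add: cls_eq)
  then have "derives T' b b'" using s derives_mono by blast
  then have "derives T' a c" using e by (blast intro: derives.cut)
  then show "(x, z) \<in> QQ T T'" using e by (auto simp: QQ_def)
qed

lemma QQ_cong:
  assumes "T \<subseteq> T'"
  shows "cong_preorder (lind T) (lind_le T) (QQ T T')"
  unfolding cong_preorder_def
proof (intro HOL.conjI allI impI ballI)
  show "QQ T T' \<subseteq> lind T \<times> lind T" by (auto simp: QQ_def lind_def)
  show "\<And>a. a \<in> lind T \<Longrightarrow> (a, a) \<in> QQ T T'"
    by (auto simp: lind_def QQ_def intro: derives.refl)
  show "trans (QQ T T')" using QQ_trans[OF assms] .
  show "lind_le T \<subseteq> QQ T T'" using lind_le_sub[OF assms] .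
next
  fix S b j
  assume h: "S \<subseteq> lind T \<and> b \<in> lind T \<and> is_join (lind T) (lind_le T) S j \<and> (\<forall>a\<in>S. (a, b) \<in> QQ T T')"
  define \<Phi> where "\<Phi> = \<Union>S"
  have SS: "S = cls T ` \<Phi>"
  proof
    show "S \<subseteq> cls T ` \<Phi>"
    proof
      fix s assume "s \<in> S"
      moreover then obtain \<phi> where "s = cls T \<phi>" using h by (auto simp: lind_def)
      ultimately show "s \<in> cls T ` \<Phi>" unfolding \<Phi>_def
        by (auto intro!: image_eqI[of _ _ \<phi>] simp: mem_cls)
    qed
    show "cls T ` \<Phi> \<subseteq> S"
    proof
      fix x assume "x \<in> cls T ` \<Phi>"
      then obtain \<phi> s where "s \<in> S" "\<phi> \<in> s" "x = cls T \<phi>" unfolding \<Phi>_def by auto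
      moreover then obtain \<psi> where "s = cls T \<psi>" using h by (auto simp: lind_def)
      ultimately show "x \<in> S" by (simp add: mem_cls)
    qed
  qed
  obtain \<beta> where bb: "b = cls T \<beta>" using h by (auto simp: lind_def)
  have jl: "j \<in> lind T" using h by (simp add: is_join_def)
  have "(j, cls T (gdisj \<Phi>)) \<in> lind_le T"
    using h join_cls[of T \<Phi>] unfolding is_join_def SS by (auto simp: lind_def)
  then have 1: "(j, cls T (gdisj \<Phi>)) \<in> QQ T T'" using lind_le_sub[OF assms] by blast
  have "derives T' (gdisj \<Phi>) \<beta>"
    using h bb SS QQ_iff[OF assms] by (auto intro!: derives.disjE)
  then have "(cls T (gdisj \<Phi>), b) \<in> QQ T T'" using bb QQ_iff[OF assms] by simp
  then show "(j, b) \<in> QQ T T'" using 1 QQ_trans[OF assms] unfolding trans_def by blast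
next
  fix S b m
  assume h: "S \<subseteq> lind T \<and> finite S \<and> b \<in> lind T \<and> is_meet (lind T) (lind_le T) S m \<and> (\<forall>a\<in>S. (b, a) \<in> QQ T T')"
  then obtain \<phi> where m: "is_meet (lind T) (lind_le T) S (cls T \<phi>)"
     and q: "\<forall>\<theta>. (\<forall>a\<in>S. (cls T \<theta>, a) \<in> QQ T T') \<longrightarrow> derives T' \<theta> \<phi>"
    using finite_meet[OF _ _ assms] by blast
  obtain \<beta> where bb: "b = cls T \<beta>" using h by (auto simp: lind_def)
  have "(b, cls T \<phi>) \<in> QQ T T'" using q h bb QQ_iff[OF assms] by simp
  moreover have "(cls T \<phi>, m) \<in> lind_le T" using m h unfolding is_meet_def by blast
  then have "(cls T \<phi>, m) \<in> QQ T T'" using lind_le_sub[OF assms] by blast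
  ultimately show "(b, m) \<in> QQ T T'" using QQ_trans[OF assms] unfolding trans_def by blast
qed

lemma cp_parts:
  assumes "cong_preorder L le P"
  shows cp_refl: "a \<in> L \<Longrightarrow> (a, a) \<in> P"
    and cp_trans: "(a, b) \<in> P \<Longrightarrow> (b, c) \<in> P \<Longrightarrow> (a, c) \<in> P"
    and cp_le: "(a, b) \<in> le \<Longrightarrow> (a, b) \<in> P"
    and cp_join: "S \<subseteq> L \<Longrightarrow> b \<in> L \<Longrightarrow> is_join L le S j \<Longrightarrow> (\<And>a. a \<in> S \<Longrightarrow> (a, b) \<in> P) \<Longrightarrow> (j, b) \<in> P"
    and cp_meet: "S \<subseteq> L \<Longrightarrow> finite S \<Longrightarrow> b \<in> L \<Longrightarrow> is_meet L le S m \<Longrightarrow> (\<And>a. a \<in> S \<Longrightarrow> (b, a) \<in> P) \<Longrightarrow> (b, m) \<in> P"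
proof -
  note C = assms[unfolded cong_preorder_def]
  have A2: "\<forall>a\<in>L. (a, a) \<in> P" using C by (elim conjE) assumption
  have A3: "trans P" using C by (elim conjE) assumption
  have A4: "le \<subseteq> P" using C by (elim conjE) assumption
  have J: "\<forall>S b j. S \<subseteq> L \<and> b \<in> L \<and> is_join L le S j \<and> (\<forall>a\<in>S. (a, b) \<in> P) \<longrightarrow> (j, b) \<in> P"
    using C by (elim conjE) assumption
  have M: "\<forall>S b m. S \<subseteq> L \<and> finite S \<and> b \<in> L \<and> is_meet L le S m \<and> (\<forall>a\<in>S. (b, a) \<in> P) \<longrightarrow> (b, m) \<in> P"
    using C by (elim conjE) assumption
  show "a \<in> L \<Longrightarrow> (a, a) \<in> P" using A2 by simp
  show "(a, b) \<in> P \<Longrightarrow> (b, c) \<in> P \<Longrightarrow> (a, c) \<in> P" using A3 by (blast dest: transD)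
  show "(a, b) \<in> le \<Longrightarrow> (a, b) \<in> P" using A4 by blast
  show "S \<subseteq> L \<Longrightarrow> b \<in> L \<Longrightarrow> is_join L le S j \<Longrightarrow> (\<And>a. a \<in> S \<Longrightarrow> (a, b) \<in> P) \<Longrightarrow> (j, b) \<in> P"
    using J by blast
  show "S \<subseteq> L \<Longrightarrow> finite S \<Longrightarrow> b \<in> L \<Longrightarrow> is_meet L le S m \<Longrightarrow> (\<And>a. a \<in> S \<Longrightarrow> (b, a) \<in> P) \<Longrightarrow> (b, m) \<in> P"
    using M by blast
qed

lemma QQ_least:
  assumes cp: "cong_preorder (lind T) (lind_le T) P"
    and "{(cls T \<phi>, cls T \<psi>) | \<phi> \<psi>. (\<phi>, \<psi>) \<in> T'} \<subseteq> P"
  shows "derives T' \<phi> \<psi> \<Longrightarrow> (cls T \<phi>, cls T \<psi>) \<in> P"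
proof (induction rule: derives.induct)
  case (ax \<phi> \<psi>) then show ?case using assms(2) by blast
next
  case (refl \<phi>)
  have "cls T \<phi> \<in> lind T" by (simp add: lind_def)
  then show ?case by (rule cp_refl[OF cp])
next
  case (cut \<phi> \<psi> \<chi>) then show ?case by (blast intro: cp_trans[OF cp])
next
  case (conjE1 \<phi> \<psi>)
  show ?case by (rule cp_le[OF cp]) (simp add: le_iff derives.conjE1)
next
  case (conjE2 \<phi> \<psi>)
  show ?case by (rule cp_le[OF cp]) (simp add: le_iff derives.conjE2)
next
  case (trueI \<phi>)
  show ?case by (rule cp_le[OF cp]) (simp add: le_iff derives.trueI)
next
  case (disjI \<phi> \<Phi>)
  show ?case by (rule cp_le[OF cp]) (simp add: le_iff derives.disjI disjI)
next
  case (conjI \<theta> \<phi> \<psi>)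
  show ?case
  proof (rule cp_meet[OF cp _ _ _ meet2_cls[of T \<phi> \<psi>]])
    show "{cls T \<phi>, cls T \<psi>} \<subseteq> lind T" "cls T \<theta> \<in> lind T" by (simp_all add: lind_def)
    show "finite {cls T \<phi>, cls T \<psi>}" by simp
    fix a assume "a \<in> {cls T \<phi>, cls T \<psi>}"
    then show "(cls T \<theta>, a) \<in> P" using conjI.IH by blast
  qed
next
  case (disjE \<Phi> \<psi>)
  show ?case
  proof (rule cp_join[OF cp _ _ join_cls[of T \<Phi>]])
    show "cls T ` \<Phi> \<subseteq> lind T" "cls T \<psi> \<in> lind T" by (auto simp: lind_def)
    fix a assume "a \<in> cls T ` \<Phi>"
    then show "(a, cls T \<psi>) \<in> P" using disjE.IH by blast
  qed
qed

theorem mainTheorem14: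
  fixes T U :: "'a gtheory"
  defines "R \<equiv> {(cls T \<phi>, cls T \<psi>) | \<phi> \<psi>. (\<phi>, \<psi>) \<in> T \<union> U}"
  defines "Rbar \<equiv> least_cong_preorder (lind T) (lind_le T) R"
  shows "order_iso (lind (T \<union> U)) (lind_le (T \<union> U))
                   (pre_quot (lind T) Rbar) (pre_quot_le (lind T) Rbar)"
proof -
  define TU where "TU = T \<union> U"
  have sub: "T \<subseteq> TU" by (simp add: TU_def)
  define Q where "Q = QQ T TU"
  have RQ: "R \<subseteq> Q" unfolding R_def Q_def QQ_def TU_def by (auto intro: derives.ax)
  have "Rbar = Q"
  proof
    show "Rbar \<subseteq> Q" unfolding Rbar_def least_cong_preorder_def
      using QQ_cong[OF sub] RQ Q_def by blast
    show "Q \<subseteq> Rbar" unfolding Rbar_def least_cong_preorder_def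
    proof (rule Inter_greatest)
      fix P assume "P \<in> {P. cong_preorder (lind T) (lind_le T) P \<and> R \<subseteq> P}"
      then have P: "cong_preorder (lind T) (lind_le T) P" "R \<subseteq> P" by auto
      show "Q \<subseteq> P"
      proof
        fix x assume "x \<in> Q"
        then obtain \<phi> \<psi> where "x = (cls T \<phi>, cls T \<psi>)" "derives TU \<phi> \<psi>"
          by (auto simp: Q_def QQ_def)
        then show "x \<in> P" using QQ_least[OF P(1), of TU] P(2) unfolding R_def TU_def by blast
      qed
    qed
  qed
  define L where "L = lind T"
  have Qi: "\<And>\<phi> \<psi>. (cls T \<phi>, cls T \<psi>) \<in> Q \<longleftrightarrow> derives TU \<phi> \<psi>"
    using QQ_iff[OF sub] Q_def by simp
  have pc: "pre_class L Q (cls T \<phi>) = pre_class L Q (cls T \<psi>) \<longleftrightarrow> derives TU \<phi> \<psi> \<and> derives TU \<psi> \<phi>"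
    for \<phi> \<psi>
  proof
    assume e: "pre_class L Q (cls T \<phi>) = pre_class L Q (cls T \<psi>)"
    have "cls T \<phi> \<in> pre_class L Q (cls T \<phi>)"
      by (simp add: pre_class_def L_def lind_def Qi derives.refl)
    then have "cls T \<phi> \<in> pre_class L Q (cls T \<psi>)" using e by simp
    then show "derives TU \<phi> \<psi> \<and> derives TU \<psi> \<phi>" by (simp add: pre_class_def Qi)
  next
    assume d: "derives TU \<phi> \<psi> \<and> derives TU \<psi> \<phi>"
    show "pre_class L Q (cls T \<phi>) = pre_class L Q (cls T \<psi>)"
      unfolding pre_class_def L_def lind_def using d
      by (auto simp: Qi intro: derives.cut)
  qed
  define f where "f X = pre_class L Q (cls T (SOME \<phi>. \<phi> \<in> X))" for X
  have fc: "f (cls TU \<phi>) = pre_class L Q (cls T \<phi>)" for \<phi>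
  proof -
    have "\<phi> \<in> cls TU \<phi>" by (simp add: cls_def derives.refl)
    then have "(SOME \<psi>. \<psi> \<in> cls TU \<phi>) \<in> cls TU \<phi>" by (rule someI)
    then have "derives TU (SOME \<psi>. \<psi> \<in> cls TU \<phi>) \<phi> \<and> derives TU \<phi> (SOME \<psi>. \<psi> \<in> cls TU \<phi>)"
      by (simp add: cls_def)
    then show ?thesis unfolding f_def using pc by blast
  qed
  have bij: "bij_betw f (lind TU) (pre_quot L Q)"
    unfolding bij_betw_def
  proof
    show "inj_on f (lind TU)"
      unfolding inj_on_def lind_def by (auto simp: fc pc cls_eq)
    have "f ` lind TU = range (\<lambda>\<phi>. pre_class L Q (cls T \<phi>))"
      unfolding lind_def image_image fc by simp
    moreover have "pre_quot L Q = pre_class L Q ` range (cls T)"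
      by (simp add: pre_quot_def L_def lind_def)
    ultimately show "f ` lind TU = pre_quot L Q" by (simp add: image_image)
  qed
  have ord: "\<forall>x\<in>lind TU. \<forall>y\<in>lind TU. (x, y) \<in> lind_le TU \<longleftrightarrow> (f x, f y) \<in> pre_quot_le L Q"
  proof (intro ballI)
    fix x y assume "x \<in> lind TU" "y \<in> lind TU"
    then obtain \<phi> \<psi> where xy: "x = cls TU \<phi>" "y = cls TU \<psi>" by (auto simp: lind_def)
    have "(f x, f y) \<in> pre_quot_le L Q \<longleftrightarrow> derives TU \<phi> \<psi>"
    proof
      assume "(f x, f y) \<in> pre_quot_le L Q"
      then obtain a b where ab: "a \<in> L" "b \<in> L" "(a, b) \<in> Q"
        "pre_class L Q (cls T \<phi>) = pre_class L Q a" "pre_class L Q (cls T \<psi>) = pre_class L Q b"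
        by (auto simp: pre_quot_le_def xy fc)
      then obtain \<alpha> \<beta> where "a = cls T \<alpha>" "b = cls T \<beta>" by (auto simp: L_def lind_def)
      with ab show "derives TU \<phi> \<psi>" by (auto simp: pc Qi intro: derives.cut)
    next
      assume "derives TU \<phi> \<psi>"
      then show "(f x, f y) \<in> pre_quot_le L Q"
        unfolding pre_quot_le_def xy fc L_def lind_def using Qi by blast
    qed
    then show "(x, y) \<in> lind_le TU \<longleftrightarrow> (f x, f y) \<in> pre_quot_le L Q"
      by (simp add: xy le_iff)
  qed
  show ?thesis unfolding order_iso_def \<open>Rbar = Q\<close> TU_def[symmetric] L_def[symmetric]
    using bij ord by blast
qed

end
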